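(* Let $p\in\mathcal H(n,d)$ and suppose $p$ is affine in $x_n$, i.e. $p(x',x_n)=a(x')+x_n b(x')$ for some polynomials $a,b$ in $x'=(x_1,\dots,x_{n-1})$. Then $p\in\mathcal W$.
   Context: Write $s(x)=\sum_{j=1}^n x_j$. $\mathcal H(n,d)$ is the set of real polynomials in $x_1,\dots,x_n$ of total degree exactly $d$, with all coefficients nonnegative, such that $p(x)=1$ whenever $s(x)=1$. $\mathcal W$ is the set of polynomials obtainable from the constant polynomial $1$ by finitely many applications of operations of the form $g\mapsto g-u+s\,u$, where at each step $u$ is a polynomial such that both $u$ and $g-u$ have nonnegative coefficients. *)

theory Defs
  imports Complex_Main "HOL-Library.Poly_Mapping"
begin

text \<open>Real multivariate polynomials: finitely supported maps from monomials
(finitely supported exponent vectors, variable j = x_(j+1)) to coefficients.\<close>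

type_synonym mpoly = "(nat \<Rightarrow>\<^sub>0 nat) \<Rightarrow>\<^sub>0 real"

definition var :: "nat \<Rightarrow> mpoly" where
  "var j = Poly_Mapping.single (Poly_Mapping.single j 1) 1"

definition tdeg_mon :: "(nat \<Rightarrow>\<^sub>0 nat) \<Rightarrow> nat" where
  "tdeg_mon m = (\<Sum>i\<in>Poly_Mapping.keys m. Poly_Mapping.lookup m i)"

definition has_total_degree :: "mpoly \<Rightarrow> nat \<Rightarrow> bool" where
  "has_total_degree p d \<longleftrightarrow> Poly_Mapping.keys p \<noteq> {} \<and> Max (tdeg_mon ` Poly_Mapping.keys p) = d"

text \<open>polynomial only involves the variables x_1..x_n (indices 0..n-1)\<close>
definition in_vars :: "nat \<Rightarrow> mpoly \<Rightarrow> bool" where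
  "in_vars n p \<longleftrightarrow> (\<forall>m\<in>Poly_Mapping.keys p. Poly_Mapping.keys m \<subseteq> {..<n})"

definition nonneg_coeffs :: "mpoly \<Rightarrow> bool" where
  "nonneg_coeffs p \<longleftrightarrow> (\<forall>m. Poly_Mapping.lookup p m \<ge> 0)"

definition peval :: "mpoly \<Rightarrow> (nat \<Rightarrow> real) \<Rightarrow> real" where
  "peval p x = (\<Sum>m\<in>Poly_Mapping.keys p. Poly_Mapping.lookup p m * (\<Prod>i\<in>Poly_Mapping.keys m. x i ^ Poly_Mapping.lookup m i))"

definition spoly :: "nat \<Rightarrow> mpoly" where
  "spoly n = (\<Sum>j<n. var j)"

definition H :: "nat \<Rightarrow> nat \<Rightarrow> mpoly set" where
  "H n d = {p. in_vars n p \<and> has_total_degree p d \<and> nonneg_coeffs p \<and>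
               (\<forall>x. (\<Sum>j<n. x j) = 1 \<longrightarrow> peval p x = 1)}"

inductive_set W :: "nat \<Rightarrow> mpoly set" for n :: nat where
  W_one: "1 \<in> W n"
| W_step: "g \<in> W n \<Longrightarrow> nonneg_coeffs u \<Longrightarrow> nonneg_coeffs (g - u) \<Longrightarrow>
           g - u + spoly n * u \<in> W n"

end

theory Submission
  imports Defs "HOL-Computational_Algebra.Polynomial"
begin


definition mon :: "(nat \<Rightarrow>\<^sub>0 nat) \<Rightarrow> (nat \<Rightarrow> real) \<Rightarrow> real" where
  "mon m x = (\<Prod>i\<in>Poly_Mapping.keys m. x i ^ Poly_Mapping.lookup m i)"

lemma mon_superset:
  assumes "finite T" "Poly_Mapping.keys m \<subseteq> T"
  shows "mon m x = (\<Prod>i\<in>T. x i ^ Poly_Mapping.lookup m i)"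
  unfolding mon_def
  by (rule prod.mono_neutral_left) (use assms in \<open>auto simp: in_keys_iff\<close>)

lemma mon_add: "mon (m + r) x = mon m x * mon r x"
proof -
  let ?T = "Poly_Mapping.keys m \<union> Poly_Mapping.keys r"
  have f: "finite ?T" by simp
  have "mon (m + r) x = (\<Prod>i\<in>?T. x i ^ Poly_Mapping.lookup (m + r) i)"
    by (rule mon_superset[OF f keys_add])
  also have "\<dots> = (\<Prod>i\<in>?T. x i ^ Poly_Mapping.lookup m i) * (\<Prod>i\<in>?T. x i ^ Poly_Mapping.lookup r i)"
    by (simp add: lookup_add power_add prod.distrib)
  also have "\<dots> = mon m x * mon r x"
  proof -
    have m1: "mon m x = (\<Prod>i\<in>?T. x i ^ Poly_Mapping.lookup m i)" by (rule mon_superset[OF f]) auto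
    have m2: "mon r x = (\<Prod>i\<in>?T. x i ^ Poly_Mapping.lookup r i)" by (rule mon_superset[OF f]) auto
    show ?thesis by (simp only: m1 m2)
  qed
  finally show ?thesis .
qed

lemma mon_zero [simp]: "mon 0 x = 1" by (simp add: mon_def)

lemma mon_single [simp]: "mon (Poly_Mapping.single j 1) x = x j" by (simp add: mon_def)

lemma peval_mon: "peval p x = (\<Sum>m\<in>Poly_Mapping.keys p. Poly_Mapping.lookup p m * mon m x)"
  by (simp add: peval_def mon_def)

lemma peval_superset:
  assumes "finite S" "Poly_Mapping.keys p \<subseteq> S"
  shows "peval p x = (\<Sum>m\<in>S. Poly_Mapping.lookup p m * mon m x)"
  unfolding peval_mon
  by (rule sum.mono_neutral_left) (use assms in \<open>auto simp: in_keys_iff\<close>)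

lemma peval_add: "peval (p + q) x = peval p x + peval q x"
proof -
  let ?S = "Poly_Mapping.keys p \<union> Poly_Mapping.keys q"
  have f: "finite ?S" by simp
  have "peval (p + q) x = (\<Sum>m\<in>?S. Poly_Mapping.lookup (p + q) m * mon m x)"
    by (rule peval_superset[OF f keys_add])
  also have "\<dots> = (\<Sum>m\<in>?S. Poly_Mapping.lookup p m * mon m x) + (\<Sum>m\<in>?S. Poly_Mapping.lookup q m * mon m x)"
    by (simp add: lookup_add distrib_right sum.distrib)
  also have "\<dots> = peval p x + peval q x"
    using peval_superset[OF f, of p] peval_superset[OF f, of q] by auto
  finally show ?thesis .
qed

lemma peval_diff: "peval (p - q) x = peval p x - peval q x"
proof -
  let ?S = "Poly_Mapping.keys p \<union> Poly_Mapping.keys q"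
  have f: "finite ?S" by simp
  have k: "Poly_Mapping.keys (p - q) \<subseteq> ?S"
    by (auto simp: in_keys_iff lookup_minus)
  have "peval (p - q) x = (\<Sum>m\<in>?S. Poly_Mapping.lookup (p - q) m * mon m x)"
    by (rule peval_superset[OF f k])
  also have "\<dots> = (\<Sum>m\<in>?S. Poly_Mapping.lookup p m * mon m x) - (\<Sum>m\<in>?S. Poly_Mapping.lookup q m * mon m x)"
    by (simp add: lookup_minus left_diff_distrib sum_subtractf)
  also have "\<dots> = peval p x - peval q x"
    using peval_superset[OF f, of p] peval_superset[OF f, of q] by auto
  finally show ?thesis .
qed

lemma peval_zero [simp]: "peval 0 x = 0" by (simp add: peval_def)

lemma peval_one [simp]: "peval 1 x = 1" by (simp add: peval_mon lookup_one)

lemma peval_sum: "finite A \<Longrightarrow> peval (\<Sum>a\<in>A. f a) x = (\<Sum>a\<in>A. peval (f a) x)"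
  by (induction A rule: finite_induct) (auto simp: peval_add)

lemma lookup_single_mult:
  fixes e :: "nat \<Rightarrow>\<^sub>0 nat" and c :: real and q :: mpoly
  shows "Poly_Mapping.lookup (Poly_Mapping.single e c * q) m =
    (if \<exists>r. m = e + r then c * Poly_Mapping.lookup q (m - e) else 0)"
proof -
  have "Poly_Mapping.lookup (Poly_Mapping.single e c * q) m =
     (\<Sum>l. (c when e = l) * (\<Sum>r. Poly_Mapping.lookup q r when m = l + r))"
    by (simp add: lookup_mult lookup_single)
  also have "\<dots> = (\<Sum>l. ((c * (\<Sum>r. Poly_Mapping.lookup q r when m = l + r))) when e = l)"
    by (simp add: when_mult)
  also have "\<dots> = c * (\<Sum>r. Poly_Mapping.lookup q r when m = e + r)"
    by simp
  also have "\<dots> = (if \<exists>r. m = e + r then c * Poly_Mapping.lookup q (m - e) else 0)"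
  proof (cases "\<exists>r. m = e + r")
    case True
    then obtain r0 where r0: "m = e + r0" by blast
    have "(\<Sum>r. Poly_Mapping.lookup q r when m = e + r) = (\<Sum>r. Poly_Mapping.lookup q r when r0 = r)"
    proof -
      have c: "\<And>a. (e + r0 = e + a) \<longleftrightarrow> (r0 = a)" by (metis add_left_imp_eq)
      show ?thesis unfolding r0 c ..
    qed
    also have "\<dots> = Poly_Mapping.lookup q r0" by simp
    finally show ?thesis using True r0 by simp
  next
    case False
    then show ?thesis by (simp add: when_def)
  qed
  finally show ?thesis .
qed

lemma peval_single_mult:
  fixes e :: "nat \<Rightarrow>\<^sub>0 nat" and c :: real and q :: mpoly
  shows "peval (Poly_Mapping.single e c * q) x = c * mon e x * peval q x"
proof -
  let ?S = "(\<lambda>r. e + r) ` Poly_Mapping.keys q"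
  have k: "Poly_Mapping.keys (Poly_Mapping.single e c * q) \<subseteq> ?S"
    by (auto simp: in_keys_iff lookup_single_mult split: if_splits)
  have "peval (Poly_Mapping.single e c * q) x
      = (\<Sum>m\<in>?S. Poly_Mapping.lookup (Poly_Mapping.single e c * q) m * mon m x)"
    by (rule peval_superset[OF _ k]) simp
  also have "\<dots> = (\<Sum>r\<in>Poly_Mapping.keys q. Poly_Mapping.lookup (Poly_Mapping.single e c * q) (e + r) * mon (e + r) x)"
    by (subst sum.reindex) (auto simp: inj_on_def)
  also have "\<dots> = (\<Sum>r\<in>Poly_Mapping.keys q. c * mon e x * (Poly_Mapping.lookup q r * mon r x))"
  proof (rule sum.cong)
    fix r
    have "Poly_Mapping.lookup (Poly_Mapping.single e c * q) (e + r) = c * Poly_Mapping.lookup q r"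
      by (simp add: lookup_single_mult)
    then show "Poly_Mapping.lookup (Poly_Mapping.single e c * q) (e + r) * mon (e + r) x =
      c * mon e x * (Poly_Mapping.lookup q r * mon r x)"
      by (simp add: mon_add)
  qed simp
  also have "\<dots> = c * mon e x * peval q x"
    by (simp add: peval_mon sum_distrib_left)
  finally show ?thesis .
qed

lemma peval_var_mult: "peval (var j * q) x = x j * peval q x"
  by (simp add: var_def peval_single_mult mon_def)

lemma peval_spoly_mult: "peval (spoly k * q) x = (\<Sum>j<k. x j) * peval q x"
  by (simp add: spoly_def sum_distrib_right peval_sum peval_var_mult)

lemma lookup_var_mult: "Poly_Mapping.lookup (var j * q) m =
   (if \<exists>r. m = Poly_Mapping.single j 1 + r then Poly_Mapping.lookup q (m - Poly_Mapping.single j 1) else 0)"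
  by (simp add: var_def lookup_single_mult)

lemma lookup_spoly_mult: "Poly_Mapping.lookup (spoly k * q) m = (\<Sum>j<k. Poly_Mapping.lookup (var j * q) m)"
  by (simp add: spoly_def sum_distrib_right lookup_sum)



lemma digits_bound:
  fixes f :: "nat \<Rightarrow> nat"
  shows "\<forall>i<L. f i < N \<Longrightarrow> (\<Sum>i<L. f i * N ^ i) < N ^ L"
proof (induction L)
  case 0 then show ?case by simp
next
  case (Suc L)
  have p1: "\<forall>i<L. f i < N" using Suc.prems by simp
  have h1: "(\<Sum>i<L. f i * N ^ i) < N ^ L" using Suc.IH[OF p1] .
  have h2: "f L < N" using Suc.prems by simp
  have "(\<Sum>i<Suc L. f i * N ^ i) = (\<Sum>i<L. f i * N ^ i) + f L * N ^ L" by simp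
  also have "\<dots> < N ^ L + f L * N ^ L" using h1 by (rule add_strict_right_mono)
  also have "\<dots> = (Suc (f L)) * N ^ L" by simp
  also have "\<dots> \<le> N * N ^ L" using h2 by (intro mult_le_mono1) simp
  also have "\<dots> = N ^ Suc L" by simp
  finally show ?case .
qed

lemma digits_inj:
  fixes f g :: "nat \<Rightarrow> nat"
  shows "\<forall>i<L. f i < N \<Longrightarrow> \<forall>i<L. g i < N \<Longrightarrow>
    (\<Sum>i<L. f i * N ^ i) = (\<Sum>i<L. g i * N ^ i) \<Longrightarrow> \<forall>i<L. f i = g i"
proof (induction L)
  case 0 then show ?case by simp
next
  case (Suc L)
  let ?A = "\<Sum>i<L. f i * N ^ i" and ?B = "\<Sum>i<L. g i * N ^ i"
  have pf: "\<forall>i<L. f i < N" using Suc.prems(1) by simp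
  have pg: "\<forall>i<L. g i < N" using Suc.prems(2) by simp
  have A: "?A < N ^ L" by (rule digits_bound[OF pf])
  have B: "?B < N ^ L" by (rule digits_bound[OF pg])
  have eq: "?A + f L * N ^ L = ?B + g L * N ^ L" using Suc.prems(3) by simp
  have nz: "N ^ L \<noteq> 0" using A by linarith
  have d1: "(?A + f L * N ^ L) div N ^ L = f L" using A nz by simp
  have d2: "(?B + g L * N ^ L) div N ^ L = g L" using B nz by simp
  have fl: "f L = g L" using d1 d2 eq by simp
  then have AB: "?A = ?B" using eq by simp
  have "\<forall>i<L. f i = g i" by (rule Suc.IH[OF pf pg AB])
  then show ?case using fl by (auto simp: less_Suc_eq)
qed

lemma peval_eq_zero_imp:
  assumes "\<forall>x. peval q x = 0"
  shows "q = 0"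
proof (rule ccontr)
  assume "q \<noteq> 0"
  define K where "K = Poly_Mapping.keys q"
  have finK: "finite K" by (simp add: K_def)
  have "finite (\<Union>m\<in>K. Poly_Mapping.keys m)" using finK by simp
  then have "\<exists>L. \<forall>i\<in>(\<Union>m\<in>K. Poly_Mapping.keys m). i < L"
    by (simp only: finite_nat_set_iff_bounded)
  then obtain L where L: "\<forall>i\<in>(\<Union>m\<in>K. Poly_Mapping.keys m). i < L" ..
  have "finite (\<Union>m\<in>K. Poly_Mapping.lookup m ` Poly_Mapping.keys m)" using finK by simp
  then have "\<exists>N0. \<forall>v\<in>(\<Union>m\<in>K. Poly_Mapping.lookup m ` Poly_Mapping.keys m). v < N0"
    by (simp only: finite_nat_set_iff_bounded)
  then obtain N0 where N0: "\<forall>v\<in>(\<Union>m\<in>K. Poly_Mapping.lookup m ` Poly_Mapping.keys m). v < N0" ..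
  define N where "N = Suc N0"
  have lt: "Poly_Mapping.lookup m i < N" if "m \<in> K" for m i
  proof (cases "i \<in> Poly_Mapping.keys m")
    case True then show ?thesis using N0 that unfolding N_def by fastforce
  next
    case False then show ?thesis by (simp add: in_keys_iff N_def)
  qed
  have kL: "Poly_Mapping.keys m \<subseteq> {..<L}" if "m \<in> K" for m
    using L that by auto
  define e where "e m = (\<Sum>i<L. Poly_Mapping.lookup m i * N ^ i)" for m
  have einj: "m = m'" if "m \<in> K" "m' \<in> K" "e m = e m'" for m m'
  proof (rule poly_mapping_eqI)
    fix i
    show "Poly_Mapping.lookup m i = Poly_Mapping.lookup m' i"
    proof (cases "i < L")
      case True
      have "\<forall>i<L. Poly_Mapping.lookup m i = Poly_Mapping.lookup m' i"
        by (rule digits_inj[of L "Poly_Mapping.lookup m" N "Poly_Mapping.lookup m'"])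
          (use that lt in \<open>auto simp: e_def\<close>)
      then show ?thesis using True by simp
    next
      case False
      then have "i \<notin> Poly_Mapping.keys m" "i \<notin> Poly_Mapping.keys m'" using kL that by auto
      then show ?thesis by (simp add: in_keys_iff)
    qed
  qed
  have mon_e: "mon m (\<lambda>i. t ^ (N ^ i)) = t ^ e m" if "m \<in> K" for m and t :: real
  proof -
    have "mon m (\<lambda>i. t ^ (N ^ i)) = (\<Prod>i<L. (t ^ (N ^ i)) ^ Poly_Mapping.lookup m i)"
      by (rule mon_superset) (use kL that in auto)
    also have "\<dots> = (\<Prod>i<L. t ^ (Poly_Mapping.lookup m i * N ^ i))"
      by (simp add: power_mult[symmetric] mult.commute)
    also have "\<dots> = t ^ e m" by (simp add: e_def power_sum)
    finally show ?thesis .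
  qed
  define P where "P = (\<Sum>m\<in>K. monom (Poly_Mapping.lookup q m) (e m))"
  have Pz: "\<forall>t. poly P t = 0"
  proof
    fix t
    have "poly P t = (\<Sum>m\<in>K. Poly_Mapping.lookup q m * mon m (\<lambda>i. t ^ (N ^ i)))"
      by (simp add: P_def poly_sum poly_monom mon_e)
    also have "\<dots> = peval q (\<lambda>i. t ^ (N ^ i))" by (simp add: peval_mon K_def)
    finally show "poly P t = 0" using assms by simp
  qed
  then have P0: "P = 0" by (simp only: poly_all_0_iff_0)
  have "K \<noteq> {}" using \<open>q \<noteq> 0\<close> by (simp add: K_def)
  then obtain m0 where m0: "m0 \<in> K" by auto
  have "coeff P (e m0) = (\<Sum>m\<in>K. if m = m0 then Poly_Mapping.lookup q m else 0)"
    unfolding P_def coeff_sum coeff_monom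
    by (rule sum.cong) (use einj m0 in auto)
  also have "\<dots> = Poly_Mapping.lookup q m0" using m0 finK by simp
  finally have "Poly_Mapping.lookup q m0 = 0" using P0 by simp
  then show False using m0 by (simp add: K_def in_keys_iff)
qed



lemma tdeg_superset:
  assumes "finite T" "Poly_Mapping.keys m \<subseteq> T"
  shows "tdeg_mon m = (\<Sum>i\<in>T. Poly_Mapping.lookup m i)"
  unfolding tdeg_mon_def
  by (rule sum.mono_neutral_left) (use assms in \<open>auto simp: in_keys_iff\<close>)

lemma tdeg_add: "tdeg_mon (m + r) = tdeg_mon m + tdeg_mon r"
proof -
  let ?T = "Poly_Mapping.keys m \<union> Poly_Mapping.keys r"
  have f: "finite ?T" by simp
  have "tdeg_mon (m + r) = (\<Sum>i\<in>?T. Poly_Mapping.lookup (m + r) i)"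
    by (rule tdeg_superset[OF f keys_add])
  also have "\<dots> = (\<Sum>i\<in>?T. Poly_Mapping.lookup m i) + (\<Sum>i\<in>?T. Poly_Mapping.lookup r i)"
    by (simp add: lookup_add sum.distrib)
  also have "\<dots> = tdeg_mon m + tdeg_mon r"
    using tdeg_superset[OF f, of m] tdeg_superset[OF f, of r] by auto
  finally show ?thesis .
qed

lemma tdeg_single1 [simp]: "tdeg_mon (Poly_Mapping.single j 1) = 1"
  by (simp add: tdeg_mon_def)

lemma tdeg_single1' [simp]: "tdeg_mon (Poly_Mapping.single j (Suc 0)) = 1"
  by (simp add: tdeg_mon_def)

lemma tdeg_zero [simp]: "tdeg_mon 0 = 0"
  by (simp add: tdeg_mon_def)

lemma nonneg_var_mult: "nonneg_coeffs q \<Longrightarrow> nonneg_coeffs (var j * q)"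
  by (simp add: nonneg_coeffs_def lookup_var_mult)

lemma nonneg_spoly_mult: "nonneg_coeffs q \<Longrightarrow> nonneg_coeffs (spoly k * q)"
  using nonneg_var_mult unfolding nonneg_coeffs_def
  by (simp add: lookup_spoly_mult sum_nonneg)

definition restr :: "((nat \<Rightarrow>\<^sub>0 nat) \<Rightarrow> bool) \<Rightarrow> mpoly \<Rightarrow> mpoly" where
  "restr P b = (\<Sum>m\<in>{m\<in>Poly_Mapping.keys b. P m}. Poly_Mapping.single m (Poly_Mapping.lookup b m))"

lemma lookup_restr:
  "Poly_Mapping.lookup (restr P b) r = (if P r then Poly_Mapping.lookup b r else 0)"
proof -
  have "Poly_Mapping.lookup (restr P b) r =
    (\<Sum>m\<in>{m\<in>Poly_Mapping.keys b. P m}. if m = r then Poly_Mapping.lookup b m else 0)"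
    by (simp add: restr_def lookup_sum lookup_single when_def)
  also have "\<dots> = (if r \<in> {m\<in>Poly_Mapping.keys b. P m} then Poly_Mapping.lookup b r else 0)"
    by (simp add: sum.delta')
  also have "\<dots> = (if P r then Poly_Mapping.lookup b r else 0)"
    by (auto simp: in_keys_iff)
  finally show ?thesis .
qed

theorem lemma6:
  fixes n d :: nat and p :: mpoly
  assumes "n \<ge> 1"
    and "p \<in> H n d"
    and "\<exists>a b. in_vars (n - 1) a \<and> in_vars (n - 1) b \<and> p = a + var (n - 1) * b"
  shows "p \<in> W n"
proof -
  define k where "k = n - 1"
  have nk: "n = Suc k" using assms(1) by (simp add: k_def)
  obtain a b where ia: "in_vars k a" and ib: "in_vars k b" and pk: "p = a + var k * b"
    using assms(3) unfolding k_def by auto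
  have pH: "nonneg_coeffs p" "\<And>x. (\<Sum>j<n. x j) = 1 \<Longrightarrow> peval p x = 1"
    using assms(2) by (auto simp: H_def)
  define e where "e = Poly_Mapping.single k (1::nat)"
  have ke: "k \<in> Poly_Mapping.keys (e + r)" for r
    by (simp add: e_def in_keys_iff lookup_add)
  have a_e: "Poly_Mapping.lookup a (e + r) = 0" for r
  proof (rule ccontr)
    assume "Poly_Mapping.lookup a (e + r) \<noteq> 0"
    then have "e + r \<in> Poly_Mapping.keys a" by (simp add: in_keys_iff)
    then have "Poly_Mapping.keys (e + r) \<subseteq> {..<k}" using ia by (simp add: in_vars_def)
    then show False using ke[of r] by auto
  qed
  have vshift: "Poly_Mapping.lookup (var k * q) (e + r) = Poly_Mapping.lookup q r" for q r
    unfolding e_def by (simp add: lookup_var_mult)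
  have vnot: "Poly_Mapping.lookup (var k * q) m = 0" if "\<not> (\<exists>r. m = e + r)" for q m
    using that unfolding e_def by (simp add: lookup_var_mult)
  have p_nonneg: "0 \<le> Poly_Mapping.lookup p m" for m
    using pH(1) by (simp add: nonneg_coeffs_def)
  have a_nonneg: "Poly_Mapping.lookup a m \<ge> 0" for m
  proof (cases "\<exists>r. m = e + r")
    case True
    then obtain r where "m = e + r" by auto
    then show ?thesis using a_e[of r] by simp
  next
    case False
    have "Poly_Mapping.lookup p m = Poly_Mapping.lookup a m + Poly_Mapping.lookup (var k * b) m"
      by (simp add: pk lookup_add)
    also have "\<dots> = Poly_Mapping.lookup a m" using vnot[OF False] by simp
    finally show ?thesis using p_nonneg[of m] by simp
  qed
  have b_nonneg: "Poly_Mapping.lookup b r \<ge> 0" for r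
  proof -
    have "Poly_Mapping.lookup p (e + r) = Poly_Mapping.lookup a (e + r) + Poly_Mapping.lookup (var k * b) (e + r)"
      by (simp add: pk lookup_add)
    also have "\<dots> = Poly_Mapping.lookup b r" using a_e[of r] vshift[of b r] by simp
    finally show ?thesis using p_nonneg[of "e + r"] by simp
  qed
  have bN: "nonneg_coeffs b" using b_nonneg by (simp add: nonneg_coeffs_def)
  have ident: "a = 1 - b + spoly k * b"
  proof -
    have "a - (1 - b + spoly k * b) = 0"
    proof (rule peval_eq_zero_imp, intro allI)
      fix x :: "nat \<Rightarrow> real"
      define y where "y = x(k := 1 - (\<Sum>j<k. x j))"
      have yx: "y i = x i" if "i < k" for i using that by (simp add: y_def)
      have "(\<Sum>j<n. y j) = (\<Sum>j<k. y j) + y k" by (simp add: nk)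
      also have "(\<Sum>j<k. y j) = (\<Sum>j<k. x j)" using yx by simp
      finally have "(\<Sum>j<n. y j) = 1" by (simp add: y_def)
      then have py: "peval p y = 1" by (rule pH(2))
      have same: "peval c y = peval c x" if "in_vars k c" for c
        unfolding peval_mon
      proof (rule sum.cong)
        fix m assume "m \<in> Poly_Mapping.keys c"
        then have "Poly_Mapping.keys m \<subseteq> {..<k}" using that by (auto simp: in_vars_def)
        then have "mon m y = mon m x" unfolding mon_def
          by (intro prod.cong refl) (use yx in auto)
        then show "Poly_Mapping.lookup c m * mon m y = Poly_Mapping.lookup c m * mon m x"
          by simp
      qed simp
      have "peval p y = peval a x + (1 - (\<Sum>j<k. x j)) * peval b x"
        using same[OF ia] same[OF ib] by (simp add: pk peval_add peval_var_mult y_def)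
      moreover have "peval (a - (1 - b + spoly k * b)) x
          = peval a x - (1 - peval b x + (\<Sum>j<k. x j) * peval b x)"
        by (simp only: peval_diff peval_add peval_spoly_mult peval_one)
      ultimately show "peval (a - (1 - b + spoly k * b)) x = 0"
        using py by (simp add: algebra_simps)
    qed
    then show ?thesis by simp
  qed
  have spoly_n: "spoly n = spoly k + var k" by (simp add: spoly_def nk)
  define B where "B t = restr (\<lambda>m. tdeg_mon m < t) b" for t
  define g where "g t = 1 - B t + spoly n * B t" for t
  have BN: "nonneg_coeffs (B t)" for t
    using b_nonneg by (simp add: nonneg_coeffs_def B_def lookup_restr)
  have lookup_sB: "Poly_Mapping.lookup (spoly n * B t) m = Poly_Mapping.lookup (spoly n * b) m"
    if "tdeg_mon m \<le> t" for m t
    unfolding lookup_spoly_mult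
  proof (rule sum.cong)
    fix j
    show "Poly_Mapping.lookup (var j * B t) m = Poly_Mapping.lookup (var j * b) m"
    proof (cases "\<exists>r. m = Poly_Mapping.single j 1 + r")
      case True
      then obtain r where r: "m = Poly_Mapping.single j 1 + r" by auto
      then have "tdeg_mon r < t" using that by (simp add: tdeg_add)
      then show ?thesis using r by (simp add: lookup_var_mult B_def lookup_restr)
    next
      case False then show ?thesis by (simp add: lookup_var_mult)
    qed
  qed simp
  have gW: "g t \<in> W n" for t
  proof (induction t)
    case 0
    have "B 0 = 0" by (rule poly_mapping_eqI) (simp add: B_def lookup_restr)
    then show ?case by (simp add: g_def W_one)
  next
    case (Suc t)
    define u where "u = restr (\<lambda>m. tdeg_mon m = t) b"
    have BS: "B (Suc t) = B t + u"
      by (rule poly_mapping_eqI) (auto simp: B_def u_def lookup_restr lookup_add)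
    have uN: "nonneg_coeffs u" using b_nonneg by (simp add: nonneg_coeffs_def u_def lookup_restr)
    have gu: "nonneg_coeffs (g t - u)"
      unfolding nonneg_coeffs_def
    proof
      fix m
      have eq: "Poly_Mapping.lookup (g t - u) m = Poly_Mapping.lookup 1 m - Poly_Mapping.lookup (B t) m
          - Poly_Mapping.lookup u m + Poly_Mapping.lookup (spoly n * B t) m"
        by (simp add: g_def lookup_minus lookup_add)
      show "0 \<le> Poly_Mapping.lookup (g t - u) m"
      proof (cases "tdeg_mon m \<le> t")
        case True
        have s1: "Poly_Mapping.lookup (B t) m + Poly_Mapping.lookup u m = Poly_Mapping.lookup b m"
          using True by (auto simp: B_def u_def lookup_restr)
        have am: "Poly_Mapping.lookup a m = Poly_Mapping.lookup 1 m - Poly_Mapping.lookup b m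
             + Poly_Mapping.lookup (spoly k * b) m"
          by (subst ident) (simp add: lookup_minus lookup_add)
        have "Poly_Mapping.lookup (g t - u) m = Poly_Mapping.lookup a m + Poly_Mapping.lookup (var k * b) m"
          using eq s1 am lookup_sB[OF True] by (simp add: spoly_n distrib_right lookup_add)
        moreover have "Poly_Mapping.lookup (var k * b) m \<ge> 0"
          using nonneg_var_mult[OF bN] by (simp add: nonneg_coeffs_def)
        ultimately show ?thesis using a_nonneg[of m] by simp
      next
        case False
        then have "m \<noteq> 0" by auto
        then have z1: "Poly_Mapping.lookup 1 m = 0" by (simp add: lookup_one)
        have z2: "Poly_Mapping.lookup (B t) m = 0" and z3: "Poly_Mapping.lookup u m = 0"
          using False by (auto simp: B_def u_def lookup_restr)
        have z4: "Poly_Mapping.lookup (spoly n * B t) m \<ge> 0"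
          using nonneg_spoly_mult[OF BN] by (simp add: nonneg_coeffs_def)
        have "Poly_Mapping.lookup (g t - u) m = 0 - 0 - 0 + Poly_Mapping.lookup (spoly n * B t) m"
          using eq by (simp only: z1 z2 z3)
        then show ?thesis using z4 by simp
      qed
    qed
    have "g t - u + spoly n * u \<in> W n" by (rule W_step[OF Suc uN gu])
    moreover have "g t - u + spoly n * u = g (Suc t)"
      by (simp add: g_def BS algebra_simps)
    ultimately show ?case by simp
  qed
  have "finite (tdeg_mon ` Poly_Mapping.keys b)" by simp
  then have "\<exists>T. \<forall>v\<in>tdeg_mon ` Poly_Mapping.keys b. v < T"
    by (simp only: finite_nat_set_iff_bounded)
  then obtain T where T: "\<forall>v\<in>tdeg_mon ` Poly_Mapping.keys b. v < T" ..
  have BT: "B T = b"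
  proof (rule poly_mapping_eqI)
    fix r
    show "Poly_Mapping.lookup (B T) r = Poly_Mapping.lookup b r"
      using T by (auto simp: B_def lookup_restr in_keys_iff)
  qed
  have "g T = p"
  proof -
    have "g T = 1 - b + spoly k * b + var k * b" by (simp add: g_def BT spoly_n algebra_simps)
    also have "\<dots> = p" using ident pk by simp
    finally show ?thesis .
  qed
  then show ?thesis using gW[of T] by simp
qed

end
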